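(* (1) For every LTL formula $\varphi$ in PNF and every $x\in\Sigma$, $\partial_x(\varphi)\subseteq\mathrm{SET}(\partial^+(\varphi))$. (2) For all $\varphi'\in\partial^+(\varphi)$ and $x\in\Sigma$, $\partial_x(\varphi')\subseteq\mathrm{SET}(\partial^+(\varphi))$.
   Context: LTL formulae in PNF: $\varphi,\psi ::= p \mid \neg p \mid \mathbf{tt} \mid \mathbf{ff} \mid \varphi\wedge\psi \mid \varphi\vee\psi \mid \bigcirc\varphi \mid \varphi\,\mathcal{U}\,\psi \mid \varphi\,\mathcal{R}\,\psi$, over words in $\Sigma^\omega$ with an interpretation $I:\Sigma\to\mathcal{P}(AP)$. Temporal formula: does not start with $\wedge$ or $\vee$. Monomials $\mu,\nu$: $\mathbf{ff}$ or consistent sets of literals; $x\models\mu$ means all literals of $\mu$ hold under $I(x)$; $\mu\sqcap\nu$ is $\mathbf{ff}$ if either is $\mathbf{ff}$ or $\mu\cup\nu$ is contradictory, else $\mu\cup\nu$. $\varphi\,\dot\wedge\,\psi$: formal conjunction, normalized modulo associativity, commutativity, idempotence ($\mathbf{tt}$ = empty formal conjunction). $\mathrm{simp}(\varphi\wedge\psi)=\{\varphi'\,\dot\wedge\,\psi'\mid\varphi'\in\mathrm{simp}(\varphi),\psi'\in\mathrm{simp}(\psi)\}$, $\mathrm{simp}(\varphi\vee\psi)=\mathrm{simp}(\varphi)\cup\mathrm{simp}(\psi)$, $\mathrm{simp}(\varphi)=\{\varphi\}$ for temporal $\varphi$. Linear factors: $\mathrm{LF}(\ell)=\{\langle\{\ell\},\mathbf{tt}\rangle\}$,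 $\mathrm{LF}(\mathbf{tt})=\{\langle\mathbf{tt},\mathbf{tt}\rangle\}$, $\mathrm{LF}(\mathbf{ff})=\{\}$, $\mathrm{LF}(\varphi\vee\psi)=\mathrm{LF}(\varphi)\cup\mathrm{LF}(\psi)$, $\mathrm{LF}(\varphi\wedge\psi)=\{\langle\mu\sqcap\nu,\varphi'\,\dot\wedge\,\psi'\rangle\mid\langle\mu,\varphi'\rangle\in\mathrm{LF}(\varphi),\langle\nu,\psi'\rangle\in\mathrm{LF}(\psi),\mu\sqcap\nu\neq\mathbf{ff}\}$, $\mathrm{LF}(\bigcirc\varphi)=\{\langle\mathbf{tt},\varphi'\rangle\mid\varphi'\in\mathrm{simp}(\varphi)\}$, $\mathrm{LF}(\varphi\,\mathcal{U}\,\psi)=\mathrm{LF}(\psi)\cup\{\langle\mu,\varphi'\,\dot\wedge\,(\varphi\,\mathcal{U}\,\psi)\rangle\mid\langle\mu,\varphi'\rangle\in\mathrm{LF}(\varphi)\}$, $\mathrm{LF}(\varphi\,\mathcal{R}\,\psi)=\{\langle\mu\sqcap\nu,\varphi'\,\dot\wedge\,\psi'\rangle\mid\langle\mu,\varphi'\rangle\in\mathrm{LF}(\varphi),\langle\nu,\psi'\rangle\in\mathrm{LF}(\psi),\mu\sqcap\nu\neq\mathbf{ff}\}\cup\{\langle\nu,\psi'\,\dot\wedge\,(\varphi\,\mathcal{R}\,\psi)\rangle\mid\langle\nu,\psi'\rangle\in\mathrm{LF}(\psi)\}$. Partial derivatives: $\partial_x(\varphi)=\{\varphi'\mid\langle\mu,\varphi'\rangle\in\mathrm{LF}(\varphi),x\models\mu\}$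 for temporal $\varphi$, $\partial_x(\mathbf{tt})=\{\mathbf{tt}\}$, $\partial_x(\varphi\,\dot\wedge\,\psi)=\{\varphi'\,\dot\wedge\,\psi'\mid\varphi'\in\partial_x(\varphi),\psi'\in\partial_x(\psi)\}$. Iterated partial derivatives: $\partial^+(\ell)=\{\ell\}$, $\partial^+(\mathbf{tt})=\{\mathbf{tt}\}$, $\partial^+(\mathbf{ff})=\{\mathbf{ff}\}$, $\partial^+(\varphi\vee\psi)=\partial^+(\varphi\wedge\psi)=\partial^+(\varphi)\cup\partial^+(\psi)$, $\partial^+(\bigcirc\varphi)=\{\bigcirc\varphi\}\cup\partial^+(\varphi)$, $\partial^+(\varphi\,\mathcal{U}\,\psi)=\{\varphi\,\mathcal{U}\,\psi\}\cup\partial^+(\varphi)\cup\partial^+(\psi)$, $\partial^+(\varphi\,\mathcal{R}\,\psi)=\{\varphi\,\mathcal{R}\,\psi\}\cup\partial^+(\varphi)\cup\partial^+(\psi)$. For an ordered set $X=\{x_1,x_2,\dots\}$, $\mathrm{SET}(X)=\{\mathbf{tt}\}\cup\{x_{i_1}\,\dot\wedge\,\cdots\,\dot\wedge\,x_{i_n}\mid n\ge1,i_1<\dots<i_n\}$. *)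

theory Defs
  imports Main
begin

datatype 'a ltl =
    TT | FF | Prop 'a | NProp 'a
  | And "'a ltl" "'a ltl" | Or "'a ltl" "'a ltl"
  | Next "'a ltl" | Until "'a ltl" "'a ltl" | Release "'a ltl" "'a ltl"

text \<open>Formal conjunctions (normalised modulo ACI) are represented as sets of
  formulae (their conjuncts); tt is the empty formal conjunction.\<close>
definition fc :: "'a ltl \<Rightarrow> 'a ltl set" where
  "fc \<phi> = (if \<phi> = TT then {} else {\<phi>})"

text \<open>Monomials: None = ff, Some L = a (consistent) set of literals.\<close>
type_synonym 'a mono = "'a ltl set option"

definition consistent :: "'a ltl set \<Rightarrow> bool" where
  "consistent L = (\<not> (\<exists>p. Prop p \<in> L \<and> NProp p \<in> L))"

fun mmeet :: "'a mono \<Rightarrow> 'a mono \<Rightarrow> 'a mono" where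
  "mmeet (Some a) (Some b) = (if consistent (a \<union> b) then Some (a \<union> b) else None)"
| "mmeet _ _ = None"

fun lit_holds :: "'a set \<Rightarrow> 'a ltl \<Rightarrow> bool" where
  "lit_holds A (Prop p) = (p \<in> A)"
| "lit_holds A (NProp p) = (p \<notin> A)"
| "lit_holds A _ = False"

definition models :: "('s \<Rightarrow> 'a set) \<Rightarrow> 's \<Rightarrow> 'a mono \<Rightarrow> bool" where
  "models I x \<mu> = (case \<mu> of None \<Rightarrow> False | Some L \<Rightarrow> (\<forall>l \<in> L. lit_holds (I x) l))"

fun simp_ltl :: "'a ltl \<Rightarrow> 'a ltl set set" where
  "simp_ltl (And a b) = {A \<union> B | A B. A \<in> simp_ltl a \<and> B \<in> simp_ltl b}"
| "simp_ltl (Or a b) = simp_ltl a \<union> simp_ltl b"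
| "simp_ltl \<phi> = {fc \<phi>}"

fun LF :: "'a ltl \<Rightarrow> ('a mono \<times> 'a ltl set) set" where
  "LF TT = {(Some {}, {})}"
| "LF FF = {}"
| "LF (Prop p) = {(Some {Prop p}, {})}"
| "LF (NProp p) = {(Some {NProp p}, {})}"
| "LF (Or a b) = LF a \<union> LF b"
| "LF (And a b) = {(mmeet m n, A \<union> B) | m n A B.
      (m, A) \<in> LF a \<and> (n, B) \<in> LF b \<and> mmeet m n \<noteq> None}"
| "LF (Next a) = {(Some {}, A) | A. A \<in> simp_ltl a}"
| "LF (Until a b) = LF b \<union> {(m, A \<union> {Until a b}) | m A. (m, A) \<in> LF a}"
| "LF (Release a b) = {(mmeet m n, A \<union> B) | m n A B.
      (m, A) \<in> LF a \<and> (n, B) \<in> LF b \<and> mmeet m n \<noteq> None}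
    \<union> {(n, B \<union> {Release a b}) | n B. (n, B) \<in> LF b}"

definition pderiv :: "('s \<Rightarrow> 'a set) \<Rightarrow> 's \<Rightarrow> 'a ltl \<Rightarrow> 'a ltl set set" where
  "pderiv I x \<phi> = {A. \<exists>\<mu>. (\<mu>, A) \<in> LF \<phi> \<and> models I x \<mu>}"

definition pderiv_conj :: "('s \<Rightarrow> 'a set) \<Rightarrow> 's \<Rightarrow> 'a ltl set \<Rightarrow> 'a ltl set set" where
  "pderiv_conj I x S = {\<Union> (f ` S) | f. \<forall>\<phi> \<in> S. f \<phi> \<in> pderiv I x \<phi>}"

fun pderiv_plus :: "'a ltl \<Rightarrow> 'a ltl set" where
  "pderiv_plus TT = {TT}"
| "pderiv_plus FF = {FF}"
| "pderiv_plus (Prop p) = {Prop p}"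
| "pderiv_plus (NProp p) = {NProp p}"
| "pderiv_plus (Or a b) = pderiv_plus a \<union> pderiv_plus b"
| "pderiv_plus (And a b) = pderiv_plus a \<union> pderiv_plus b"
| "pderiv_plus (Next a) = {Next a} \<union> pderiv_plus a"
| "pderiv_plus (Until a b) = {Until a b} \<union> pderiv_plus a \<union> pderiv_plus b"
| "pderiv_plus (Release a b) = {Release a b} \<union> pderiv_plus a \<union> pderiv_plus b"

definition SETc :: "'a ltl set \<Rightarrow> 'a ltl set set" where
  "SETc X = {\<Union> (fc ` Y) | Y. Y \<subseteq> X \<and> finite Y}"

end

theory Submission
  imports Defs
begin

lemma simp_sub: "A \<in> simp_ltl a \<Longrightarrow> A \<subseteq> pderiv_plus a - {TT} \<and> finite A"
  by (induction a arbitrary: A) (auto simp: fc_def)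

lemma LF_sub: "(m, A) \<in> LF a \<Longrightarrow> A \<subseteq> pderiv_plus a - {TT} \<and> finite A"
proof (induction a arbitrary: m A)
  case (Next a) then show ?case using simp_sub[of A a] by auto
next
  case (Or a b) then show ?case by (auto dest: Or.IH)
next
  case (And a b)
  from And.prems obtain m1 n1 A1 B1 where "A = A1 \<union> B1" "(m1, A1) \<in> LF a" "(n1, B1) \<in> LF b"
    by auto
  with And.IH show ?case by (metis (no_types, lifting) Diff_mono Un_mono Un_Diff finite_UnI
      pderiv_plus.simps(6) order_refl)
next
  case (Until a b)
  show ?case
  proof (cases "(m, A) \<in> LF b")
    case True then show ?thesis using Until.IH(2)[OF True] by auto
  next
    case False
    with Until.prems obtain A1 where "A = A1 \<union> {Until a b}" "(m, A1) \<in> LF a" by auto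
    with Until.IH(1)[of m A1] show ?thesis by auto
  qed
next
  case (Release a b)
  show ?case
  proof (cases "\<exists>B1. A = B1 \<union> {Release a b} \<and> (m, B1) \<in> LF b")
    case True
    then obtain B1 where "A = B1 \<union> {Release a b}" "(m, B1) \<in> LF b" by blast
    with Release.IH(2)[of m B1] show ?thesis by auto
  next
    case False
    with Release.prems obtain m1 n1 A1 B1 where "A = A1 \<union> B1" "(m1, A1) \<in> LF a" "(n1, B1) \<in> LF b"
      by auto
    then have "A1 \<subseteq> pderiv_plus a - {TT} \<and> finite A1" "B1 \<subseteq> pderiv_plus b - {TT} \<and> finite B1"
      using Release.IH by blast+
    with \<open>A = A1 \<union> B1\<close> show ?thesis by auto
  qed
qed auto

lemma pp_trans: "\<phi>' \<in> pderiv_plus \<phi> \<Longrightarrow> pderiv_plus \<phi>' \<subseteq> pderiv_plus \<phi>"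
  by (induction \<phi>) auto

lemma part1: "pderiv I x \<phi> \<subseteq> SETc (pderiv_plus \<phi>)"
proof
  fix A assume "A \<in> pderiv I x \<phi>"
  then obtain m where "(m, A) \<in> LF \<phi>" by (auto simp: pderiv_def)
  from LF_sub[OF this] have h: "A \<subseteq> pderiv_plus \<phi> - {TT}" "finite A" by auto
  have "\<Union> (fc ` A) = A" using h(1) by (auto simp: fc_def)
  then show "A \<in> SETc (pderiv_plus \<phi>)" unfolding SETc_def using h by blast
qed

lemma SETc_mono: "X \<subseteq> Y \<Longrightarrow> SETc X \<subseteq> SETc Y"
  unfolding SETc_def by blast

theorem lemma7:
  fixes I :: "'s \<Rightarrow> 'a set"
  shows "(\<forall>\<phi> :: 'a ltl. \<forall>x. pderiv I x \<phi> \<subseteq> SETc (pderiv_plus \<phi>))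
       \<and> (\<forall>\<phi> :: 'a ltl. \<forall>\<phi>' \<in> pderiv_plus \<phi>. \<forall>x. pderiv I x \<phi>' \<subseteq> SETc (pderiv_plus \<phi>))"
  using part1 pp_trans SETc_mono by (meson subset_trans)

end
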